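(* Let $\Omega\subset\mathbb{R}^{n+1}$ be a compact convex body with $C^1$ boundary. Fix $X_0\in\partial\Omega$, let $X\in\partial\Omega$ and $\bar X_0,\bar X_1\in\partial\Omega^+(X_0)$, and let $(\bar X_t)_{t\in[0,1]}$ be the $c$-segment with respect to $X_0$ from $\bar X_0$ to $\bar X_1$. Then for all $t\in[0,1]$, $$-c(X,\bar X_t)+c(X_0,\bar X_t)+c(X,\bar X_0)-c(X_0,\bar X_0)\le t\big(-c(X,\bar X_1)+c(X_0,\bar X_1)+c(X,\bar X_0)-c(X_0,\bar X_0)\big).$$
   Context: $c(X,Y)=\frac{|X-Y|^2}{2}$. $\mathcal{N}_\Omega$ is the outward unit normal; $\partial\Omega^+(X_0):=\{X\in\partial\Omega\mid\langle\mathcal{N}_\Omega(X),\mathcal{N}_\Omega(X_0)\rangle>0\}$. Let $P_{X_0}$ be the orthogonal projection of $\mathbb{R}^{n+1}$ onto the tangent hyperplane $\Pi_{X_0}$ to $\partial\Omega$ at $X_0$; $P_{X_0}$ is injective on $\partial\Omega^+(X_0)$ and $\Omega_{X_0}:=P_{X_0}(\partial\Omega^+(X_0))$ is convex. The $c$-segment with respect to $X_0$ from $\bar X_0$ to $\bar X_1$ is the curve $t\mapsto\bar X_t$, where $\bar X_t$ is the unique point of $\partial\Omega^+(X_0)$ with $P_{X_0}(\bar X_t)=(1-t)P_{X_0}(\bar X_0)+tP_{X_0}(\bar X_1)$. *)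

theory Defs
  imports "HOL-Analysis.Analysis"
begin

definition cost :: "'a::euclidean_space \<Rightarrow> 'a \<Rightarrow> real" where
  "cost X Y = (norm (X - Y))\<^sup>2 / 2"

definition convex_body :: "'a::euclidean_space set \<Rightarrow> bool" where
  "convex_body \<Omega> \<longleftrightarrow> compact \<Omega> \<and> convex \<Omega> \<and> interior \<Omega> \<noteq> {}"

definition C1_defining ::
  "'a::euclidean_space set \<Rightarrow> 'a \<Rightarrow> 'a set \<Rightarrow> ('a \<Rightarrow> real) \<Rightarrow> ('a \<Rightarrow> 'a) \<Rightarrow> bool" where
  "C1_defining \<Omega> X U \<phi> g \<longleftrightarrow>
     open U \<and> X \<in> U \<and>
     (\<forall>x\<in>U. (\<phi> has_derivative (\<lambda>h. g x \<bullet> h)) (at x)) \<and>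
     continuous_on U g \<and> (\<forall>x\<in>U. g x \<noteq> 0) \<and>
     \<Omega> \<inter> U = {x\<in>U. \<phi> x \<le> 0}"

definition C1_boundary :: "'a::euclidean_space set \<Rightarrow> bool" where
  "C1_boundary \<Omega> \<longleftrightarrow> (\<forall>X\<in>frontier \<Omega>. \<exists>U \<phi> g. C1_defining \<Omega> X U \<phi> g)"

definition outward_normal :: "'a::euclidean_space set \<Rightarrow> 'a \<Rightarrow> 'a" where
  "outward_normal \<Omega> X =
     (SOME \<nu>. \<exists>U \<phi> g. C1_defining \<Omega> X U \<phi> g \<and> \<nu> = g X /\<^sub>R norm (g X))"

definition bdry_plus :: "'a::euclidean_space set \<Rightarrow> 'a \<Rightarrow> 'a set" where
  "bdry_plus \<Omega> X0 =
     {X \<in> frontier \<Omega>. outward_normal \<Omega> X \<bullet> outward_normal \<Omega> X0 > 0}"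

definition tangent_proj :: "'a::euclidean_space set \<Rightarrow> 'a \<Rightarrow> 'a \<Rightarrow> 'a" where
  "tangent_proj \<Omega> X0 Y =
     Y - ((Y - X0) \<bullet> outward_normal \<Omega> X0) *\<^sub>R outward_normal \<Omega> X0"

definition c_segment :: "'a::euclidean_space set \<Rightarrow> 'a \<Rightarrow> 'a \<Rightarrow> 'a \<Rightarrow> real \<Rightarrow> 'a" where
  "c_segment \<Omega> X0 Y0 Y1 t =
     (THE Y. Y \<in> bdry_plus \<Omega> X0 \<and>
        tangent_proj \<Omega> X0 Y = (1 - t) *\<^sub>R tangent_proj \<Omega> X0 Y0 + t *\<^sub>R tangent_proj \<Omega> X0 Y1)"

end

theory Submission
  imports Defs
begin

lemma line_deriv:
  assumes "C1_defining \<Omega> Y U \<phi> g"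
  shows "((\<lambda>s. \<phi> (Y + s *\<^sub>R d)) has_real_derivative (g Y \<bullet> d)) (at 0)"
proof -
  have dY: "(\<phi> has_derivative (\<lambda>h. g Y \<bullet> h)) (at Y)"
    using assms unfolding C1_defining_def by blast
  have dl: "((\<lambda>s::real. Y + s *\<^sub>R d) has_derivative (\<lambda>s. s *\<^sub>R d)) (at 0)"
    by (auto intro!: derivative_eq_intros)
  have "((\<lambda>s. \<phi> (Y + s *\<^sub>R d)) has_derivative (\<lambda>s. g Y \<bullet> (s *\<^sub>R d))) (at 0)"
    using has_derivative_compose[OF dl, of \<phi> "\<lambda>h. g Y \<bullet> h"] dY by simp
  then show ?thesis
    by (simp add: has_field_derivative_def mult.commute[of _ "g Y \<bullet> d"])
qed

lemma line_in_U:
  assumes "C1_defining \<Omega> Y U \<phi> g"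
  shows "\<exists>e>0. \<forall>h. 0 < h \<and> h < e \<longrightarrow> Y + h *\<^sub>R d \<in> U"
proof -
  have "open U" "Y \<in> U" using assms unfolding C1_defining_def by auto
  then obtain r where r: "r > 0" "ball Y r \<subseteq> U" by (meson open_contains_ball)
  show ?thesis
  proof (cases "d = 0")
    case True then show ?thesis using \<open>Y \<in> U\<close> by (auto intro: exI[of _ 1])
  next
    case False
    show ?thesis
    proof (intro exI[of _ "r / norm d"] conjI allI impI)
      show "0 < r / norm d" using r False by simp
      fix h assume h: "0 < h \<and> h < r / norm d"
      then have "norm (h *\<^sub>R d) < r" using False by (simp add: pos_less_divide_eq)
      then show "Y + h *\<^sub>R d \<in> U" using r by (auto simp: dist_norm)
    qed
  qed
qed

lemma phi_zero:
  assumes "closed \<Omega>" "Y \<in> frontier \<Omega>" "C1_defining \<Omega> Y U \<phi> g"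
  shows "\<phi> Y = 0"
proof -
  have U: "open U" "Y \<in> U" and eq: "\<Omega> \<inter> U = {x\<in>U. \<phi> x \<le> 0}"
    and dY: "(\<phi> has_derivative (\<lambda>h. g Y \<bullet> h)) (at Y)"
    using assms unfolding C1_defining_def by auto
  have "Y \<in> \<Omega>" using assms by (simp add: frontier_def)
  then have le: "\<phi> Y \<le> 0" using eq U by auto
  show ?thesis
  proof (rule ccontr)
    assume "\<phi> Y \<noteq> 0"
    then have neg: "\<phi> Y < 0" using le by simp
    have "isCont \<phi> Y" using dY by (rule has_derivative_continuous)
    then have "\<forall>\<^sub>F x in at Y. \<phi> x < 0" using neg
      by (metis order_tendstoD(2) isCont_def)
    then have "\<forall>\<^sub>F x in nhds Y. x \<noteq> Y \<longrightarrow> \<phi> x < 0"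
      unfolding eventually_at_filter by simp
    then have "\<forall>\<^sub>F x in nhds Y. \<phi> x < 0"
      by (rule eventually_mono) (use neg in auto)
    moreover have "\<forall>\<^sub>F x in nhds Y. x \<in> U" using U eventually_nhds_in_open by blast
    ultimately have "\<forall>\<^sub>F x in nhds Y. x \<in> \<Omega>"
    proof (rule eventually_elim2)
      fix x assume "\<phi> x < 0" "x \<in> U"
      then have "x \<in> {x\<in>U. \<phi> x \<le> 0}" by simp
      then show "x \<in> \<Omega>" unfolding eq[symmetric] by simp
    qed
    then obtain S where "open S" "Y \<in> S" "\<forall>x\<in>S. x \<in> \<Omega>"
      unfolding eventually_nhds by blast
    then have "Y \<in> interior \<Omega>"
      by (meson interiorI subsetI)
    then show False using assms by (simp add: frontier_def)
  qed
qed

lemma supp_g: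
  assumes "convex \<Omega>" "closed \<Omega>" "Y \<in> frontier \<Omega>" "C1_defining \<Omega> Y U \<phi> g" "Q \<in> \<Omega>"
  shows "g Y \<bullet> (Q - Y) \<le> 0"
proof (rule ccontr)
  assume "\<not> g Y \<bullet> (Q - Y) \<le> 0"
  then have pos: "g Y \<bullet> (Q - Y) > 0" by simp
  obtain d1 where d1: "d1 > 0" "\<forall>h>0. h < d1 \<longrightarrow> \<phi> (Y + 0 *\<^sub>R (Q - Y)) < \<phi> (Y + (0 + h) *\<^sub>R (Q - Y))"
    using DERIV_pos_inc_right[OF line_deriv[OF assms(4), of "Q - Y"] pos] by blast
  obtain e where e: "e > 0" "\<forall>h. 0 < h \<and> h < e \<longrightarrow> Y + h *\<^sub>R (Q - Y) \<in> U"
    using line_in_U[OF assms(4)] by blast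
  define h where "h = min d1 (min e 1) / 2"
  have h: "0 < h" "h < d1" "h < e" "h \<le> 1" using d1 e by (auto simp: h_def)
  have z: "\<phi> Y = 0" using phi_zero assms by blast
  have gt: "\<phi> (Y + h *\<^sub>R (Q - Y)) > 0" using d1(2) h z by auto
  have "Y \<in> \<Omega>" using assms by (simp add: frontier_def)
  have "(1 - h) *\<^sub>R Y + h *\<^sub>R Q \<in> \<Omega>"
    using convexD[OF assms(1) \<open>Y \<in> \<Omega>\<close> assms(5), of "1 - h" h] h by simp
  moreover have "(1 - h) *\<^sub>R Y + h *\<^sub>R Q = Y + h *\<^sub>R (Q - Y)" by (simp add: algebra_simps)
  ultimately have inO: "Y + h *\<^sub>R (Q - Y) \<in> \<Omega>" by simp
  have inU: "Y + h *\<^sub>R (Q - Y) \<in> U" using e h by blast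
  have eq: "\<Omega> \<inter> U = {x\<in>U. \<phi> x \<le> 0}" using assms(4) unfolding C1_defining_def by blast
  have "Y + h *\<^sub>R (Q - Y) \<in> {x\<in>U. \<phi> x \<le> 0}" using inO inU eq by blast
  then show False using gt by simp
qed

lemma desc_g:
  assumes "closed \<Omega>" "Y \<in> frontier \<Omega>" "C1_defining \<Omega> Y U \<phi> g" "g Y \<bullet> d < 0"
  shows "\<exists>s>0. Y + s *\<^sub>R d \<in> \<Omega>"
proof -
  obtain d1 where d1: "d1 > 0" "\<forall>h>0. h < d1 \<longrightarrow> \<phi> (Y + 0 *\<^sub>R d) > \<phi> (Y + (0 + h) *\<^sub>R d)"
    using DERIV_neg_dec_right[OF line_deriv[OF assms(3), of d] assms(4)] by blast
  obtain e where e: "e > 0" "\<forall>h. 0 < h \<and> h < e \<longrightarrow> Y + h *\<^sub>R d \<in> U"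
    using line_in_U[OF assms(3)] by blast
  define h where "h = min d1 e / 2"
  have h: "0 < h" "h < d1" "h < e" using d1 e by (auto simp: h_def)
  have z: "\<phi> Y = 0" using phi_zero assms by blast
  have lt: "\<phi> (Y + h *\<^sub>R d) < 0" using d1(2) h z by auto
  have inU: "Y + h *\<^sub>R d \<in> U" using e h by blast
  have eq: "\<Omega> \<inter> U = {x\<in>U. \<phi> x \<le> 0}" using assms(3) unfolding C1_defining_def by blast
  have "Y + h *\<^sub>R d \<in> {x\<in>U. \<phi> x \<le> 0}" using inU lt by simp
  then have "Y + h *\<^sub>R d \<in> \<Omega>" using eq by blast
  then show ?thesis using h by blast
qed

lemma normal_facts:
  assumes "convex_body \<Omega>" "C1_boundary \<Omega>" "Y \<in> frontier \<Omega>"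
  shows "norm (outward_normal \<Omega> Y) = 1"
    and "\<And>Q. Q \<in> \<Omega> \<Longrightarrow> (Q - Y) \<bullet> outward_normal \<Omega> Y \<le> 0"
    and "\<And>v. norm v = 1 \<Longrightarrow> (\<forall>Q\<in>\<Omega>. (Q - Y) \<bullet> v \<le> 0) \<Longrightarrow> v = outward_normal \<Omega> Y"
proof -
  have cv: "convex \<Omega>" and cl: "closed \<Omega>" using assms(1) unfolding convex_body_def
    by (auto intro: compact_imp_closed)
  obtain U0 \<phi>0 g0 where "C1_defining \<Omega> Y U0 \<phi>0 g0" using assms(2,3) unfolding C1_boundary_def by blast
  then have "\<exists>\<nu>. \<exists>U \<phi> g. C1_defining \<Omega> Y U \<phi> g \<and> \<nu> = g Y /\<^sub>R norm (g Y)" by blast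
  then have "\<exists>U \<phi> g. C1_defining \<Omega> Y U \<phi> g \<and> outward_normal \<Omega> Y = g Y /\<^sub>R norm (g Y)"
    unfolding outward_normal_def by (rule someI_ex)
  then obtain U \<phi> g where D: "C1_defining \<Omega> Y U \<phi> g" and nu: "outward_normal \<Omega> Y = g Y /\<^sub>R norm (g Y)"
    by blast
  have gnz: "g Y \<noteq> 0" using D unfolding C1_defining_def by blast
  then have ng: "norm (g Y) > 0" by simp
  show n1: "norm (outward_normal \<Omega> Y) = 1" using gnz nu by simp
  show sup: "(Q - Y) \<bullet> outward_normal \<Omega> Y \<le> 0" if "Q \<in> \<Omega>" for Q
  proof -
    have "g Y \<bullet> (Q - Y) \<le> 0" using supp_g[OF cv cl assms(3) D that] .
    then show ?thesis using ng unfolding nu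
      by (simp add: inner_commute mult_nonneg_nonpos)
  qed
  show "v = outward_normal \<Omega> Y" if v: "norm v = 1" "\<forall>Q\<in>\<Omega>. (Q - Y) \<bullet> v \<le> 0" for v
  proof (rule ccontr)
    define \<nu> where "\<nu> = outward_normal \<Omega> Y"
    assume "v \<noteq> outward_normal \<Omega> Y"
    then have "norm (\<nu> - v) > 0" unfolding \<nu>_def by simp
    then have "(norm (\<nu> - v))\<^sup>2 > 0" by simp
    moreover have "(norm (\<nu> - v))\<^sup>2 = \<nu> \<bullet> \<nu> - 2 * (\<nu> \<bullet> v) + v \<bullet> v"
      by (simp add: power2_norm_eq_inner inner_diff inner_commute)
    moreover have "\<nu> \<bullet> \<nu> = 1" "v \<bullet> v = 1" using n1 v(1) unfolding \<nu>_def
      by (simp_all add: power2_norm_eq_inner[symmetric])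
    ultimately have lt: "\<nu> \<bullet> v < 1" by simp
    have gY: "g Y = norm (g Y) *\<^sub>R \<nu>" using gnz unfolding \<nu>_def nu by simp
    have "g Y \<bullet> (v - \<nu>) = norm (g Y) * (\<nu> \<bullet> v - \<nu> \<bullet> \<nu>)"
      by (subst gY) (simp add: inner_diff_right right_diff_distrib)
    also have "\<dots> < 0" using ng lt \<open>\<nu> \<bullet> \<nu> = 1\<close> by (simp add: mult_pos_neg)
    finally obtain s where s: "s > 0" "Y + s *\<^sub>R (v - \<nu>) \<in> \<Omega>"
      using desc_g[OF cl assms(3) D] by blast
    then have "(Y + s *\<^sub>R (v - \<nu>) - Y) \<bullet> v \<le> 0" using v(2) by blast
    then have "s * (v \<bullet> v - \<nu> \<bullet> v) \<le> 0" by (simp add: inner_diff_left)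
    then have "v \<bullet> v - \<nu> \<bullet> v \<le> 0" using s(1) by (simp add: mult_le_0_iff)
    then show False using lt \<open>v \<bullet> v = 1\<close> by simp
  qed
qed


lemma cost_diff:
  fixes X0 X Y :: "'a::euclidean_space"
  shows "cost X0 Y - cost X Y = (X0 \<bullet> X0 - X \<bullet> X) / 2 + (X - X0) \<bullet> Y"
  unfolding cost_def power2_norm_eq_inner
  by (simp add: inner_diff_left inner_diff_right inner_commute algebra_simps) (simp add: field_simps)

theorem proposition3p4:
  fixes \<Omega> :: "'a::euclidean_space set" and X0 X Y0 Y1 :: 'a and t :: real
  assumes "convex_body \<Omega>" and "C1_boundary \<Omega>"
    and "X0 \<in> frontier \<Omega>" and "X \<in> frontier \<Omega>"
    and "Y0 \<in> bdry_plus \<Omega> X0" and "Y1 \<in> bdry_plus \<Omega> X0"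
    and "t \<in> {0..1}"
  shows "- cost X (c_segment \<Omega> X0 Y0 Y1 t) + cost X0 (c_segment \<Omega> X0 Y0 Y1 t)
           + cost X Y0 - cost X0 Y0
         \<le> t * (- cost X Y1 + cost X0 Y1 + cost X Y0 - cost X0 Y0)"
proof -
  note cb = assms(1) and C1 = assms(2)
  have cv: "convex \<Omega>" and cl: "closed \<Omega>" and bd: "bounded \<Omega>" using assms(1) unfolding convex_body_def
    by (auto intro: compact_imp_closed compact_imp_bounded)
  have frO: "frontier \<Omega> \<subseteq> \<Omega>" using cl by (simp add: frontier_def)
  define N where "N = outward_normal \<Omega> X0"
  define P where "P = tangent_proj \<Omega> X0"
  have nN: "norm N = 1" unfolding N_def using normal_facts(1)[OF cb C1 assms(3)] .
  have NN: "N \<bullet> N = 1" using nN by (simp add: power2_norm_eq_inner[symmetric])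
  have t: "0 \<le> t" "t \<le> 1" using assms(7) by auto
  have bp: "Y \<in> frontier \<Omega> \<and> outward_normal \<Omega> Y \<bullet> N > 0" if "Y \<in> bdry_plus \<Omega> X0" for Y
    using that unfolding bdry_plus_def N_def by blast
  have Pdiff: "Q - Y = ((Q - X0) \<bullet> N - (Y - X0) \<bullet> N) *\<^sub>R N" if "P Q = P Y" for Q Y
  proof -
    have "Q - ((Q - X0) \<bullet> N) *\<^sub>R N = Y - ((Y - X0) \<bullet> N) *\<^sub>R N"
      using that unfolding P_def tangent_proj_def N_def .
    then show ?thesis by (simp add: algebra_simps)
  qed
  have key: "\<exists>k\<ge>0. Y = Q + k *\<^sub>R N" if "Y \<in> bdry_plus \<Omega> X0" "Q \<in> \<Omega>" "P Q = P Y" for Y Q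
  proof -
    define a where "a = (Q - X0) \<bullet> N - (Y - X0) \<bullet> N"
    have QY: "Q - Y = a *\<^sub>R N" using Pdiff[OF that(3)] unfolding a_def .
    have fY: "Y \<in> frontier \<Omega>" and pos: "outward_normal \<Omega> Y \<bullet> N > 0" using bp[OF that(1)] by auto
    have "(Q - Y) \<bullet> outward_normal \<Omega> Y \<le> 0" using normal_facts(2)[OF cb C1 fY that(2)] .
    then have "a * (N \<bullet> outward_normal \<Omega> Y) \<le> 0" unfolding QY by simp
    then have "a \<le> 0" using pos by (simp add: inner_commute mult_le_0_iff)
    moreover have "Y = Q + (- a) *\<^sub>R N" using QY by (simp add: algebra_simps)
    ultimately show ?thesis by (intro exI[of _ "-a"]) simp
  qed
  have Y0O: "Y0 \<in> \<Omega>" and Y1O: "Y1 \<in> \<Omega>" using bp assms(5,6) frO by auto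
  define Z where "Z = (1 - t) *\<^sub>R Y0 + t *\<^sub>R Y1"
  have ZO: "Z \<in> \<Omega>" unfolding Z_def using convexD[OF cv Y0O Y1O, of "1 - t" t] t by simp
  have PZ: "P Z = (1 - t) *\<^sub>R P Y0 + t *\<^sub>R P Y1"
    unfolding P_def tangent_proj_def Z_def N_def[symmetric]
    by (simp add: algebra_simps inner_add_left inner_diff_left)
  have Pshift: "P (Z + b *\<^sub>R N) = P Z" for b
    unfolding P_def tangent_proj_def N_def[symmetric]
    by (simp add: algebra_simps inner_add_left inner_diff_left NN)
  define S where "S = {s. 0 \<le> s \<and> Z + s *\<^sub>R N \<in> \<Omega>}"
  have "S = {0..} \<inter> ((\<lambda>s. Z + s *\<^sub>R N) -` \<Omega>)" unfolding S_def by auto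
  moreover have "closed ((\<lambda>s. Z + s *\<^sub>R N) -` \<Omega>)"
    by (rule continuous_closed_vimage[OF cl]) (intro continuous_intros)
  ultimately have Scl: "closed S" by (simp add: closed_Int)
  obtain B where B: "\<forall>x\<in>\<Omega>. norm x \<le> B" using bd bounded_pos by blast
  have "S \<subseteq> {0..B + norm Z}"
  proof
    fix s assume "s \<in> S"
    then have s: "0 \<le> s" "norm (Z + s *\<^sub>R N) \<le> B" using B unfolding S_def by auto
    have "norm (s *\<^sub>R N) \<le> norm (Z + s *\<^sub>R N) + norm Z" by (metis add_diff_cancel_left' norm_triangle_ineq4 add.commute)
    then show "s \<in> {0..B + norm Z}" using s nN by simp
  qed
  then have "bounded S" by (rule bounded_subset[OF bounded_closed_interval])
  then have Scp: "compact S" using Scl by (simp add: compact_eq_bounded_closed)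
  have "0 \<in> S" unfolding S_def using ZO by simp
  then obtain b where bS: "b \<in> S" and bmax: "\<forall>s\<in>S. s \<le> b" using compact_attains_sup[OF Scp] by blast
  define W where "W = Z + b *\<^sub>R N"
  have b0: "0 \<le> b" and WO: "W \<in> \<Omega>" using bS unfolding S_def W_def by auto
  have Wfr: "W \<in> frontier \<Omega>"
  proof -
    have "W \<notin> interior \<Omega>"
    proof
      assume "W \<in> interior \<Omega>"
      then obtain e where e: "e > 0" "ball W e \<subseteq> \<Omega>" using mem_interior by blast
      have "W + (e/2) *\<^sub>R N \<in> ball W e" using e nN by (simp add: dist_norm)
      then have "Z + (b + e/2) *\<^sub>R N \<in> \<Omega>" using e unfolding W_def by (auto simp: algebra_simps)
      then have "b + e/2 \<in> S" using b0 e unfolding S_def by simp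
      then show False using bmax e by fastforce
    qed
    then show ?thesis using WO cl by (simp add: frontier_def)
  qed
  define \<nu> where "\<nu> = outward_normal \<Omega> W"
  have n\<nu>: "norm \<nu> = 1" unfolding \<nu>_def using normal_facts(1)[OF cb C1 Wfr] .
  have sW: "\<And>Q. Q \<in> \<Omega> \<Longrightarrow> (Q - W) \<bullet> \<nu> \<le> 0" unfolding \<nu>_def using normal_facts(2)[OF cb C1 Wfr] .
  have Wpos: "\<nu> \<bullet> N > 0"
  proof (rule ccontr)
    assume "\<not> \<nu> \<bullet> N > 0"
    then have c: "\<nu> \<bullet> N \<le> 0" by simp
    define a0 where "a0 = (Y0 - W) \<bullet> \<nu>"
    define a1 where "a1 = (Y1 - W) \<bullet> \<nu>"
    have a0: "a0 \<le> 0" and a1: "a1 \<le> 0" unfolding a0_def a1_def using sW Y0O Y1O by auto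
    have "Z - W = (1 - t) *\<^sub>R (Y0 - W) + t *\<^sub>R (Y1 - W)" unfolding Z_def by (simp add: algebra_simps)
    then have e1: "(Z - W) \<bullet> \<nu> = (1 - t) * a0 + t * a1" unfolding a0_def a1_def by (simp add: inner_add_left)
    have "Z - W = (- b) *\<^sub>R N" unfolding W_def by simp
    then have "(Z - W) \<bullet> \<nu> = - b * (\<nu> \<bullet> N)" by (simp add: inner_commute)
    moreover have "b * (\<nu> \<bullet> N) \<le> 0" using b0 c by (simp add: mult_nonneg_nonpos)
    ultimately have ge: "(1 - t) * a0 + t * a1 \<ge> 0" using e1 by linarith
    have contra: "False" if Yb: "Y \<in> bdry_plus \<Omega> X0" "Y \<in> \<Omega>" "(Y - W) \<bullet> \<nu> = 0" for Y
    proof -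
      have fY: "Y \<in> frontier \<Omega>" using bp[OF Yb(1)] by blast
      have "\<forall>Q\<in>\<Omega>. (Q - Y) \<bullet> \<nu> \<le> 0"
      proof
        fix Q assume "Q \<in> \<Omega>"
        have "(Q - Y) \<bullet> \<nu> = (Q - W) \<bullet> \<nu> - (Y - W) \<bullet> \<nu>" by (simp add: inner_diff_left)
        then show "(Q - Y) \<bullet> \<nu> \<le> 0" using sW[OF \<open>Q \<in> \<Omega>\<close>] Yb(3) by simp
      qed
      then have "\<nu> = outward_normal \<Omega> Y" using normal_facts(3)[OF cb C1 fY n\<nu>] by blast
      then show False using bp[OF Yb(1)] c by simp
    qed
    show False
    proof (cases "t < 1")
      case True
      have "t * a1 \<le> 0" using t a1 by (simp add: mult_nonneg_nonpos)
      then have "(1 - t) * a0 \<ge> 0" using ge by linarith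
      then have "a0 \<ge> 0" using True by (simp add: zero_le_mult_iff)
      then show False using contra[OF assms(5) Y0O] a0 unfolding a0_def by simp
    next
      case False
      then have "t = 1" using t by simp
      then have "a1 \<ge> 0" using ge by simp
      then show False using contra[OF assms(6) Y1O] a1 unfolding a1_def by simp
    qed
  qed
  have Wbp: "W \<in> bdry_plus \<Omega> X0" using Wfr Wpos unfolding bdry_plus_def \<nu>_def N_def by simp
  have PW: "P W = (1 - t) *\<^sub>R P Y0 + t *\<^sub>R P Y1" unfolding W_def Pshift PZ ..
  have ex1: "\<exists>!Y. Y \<in> bdry_plus \<Omega> X0 \<and> tangent_proj \<Omega> X0 Y = (1 - t) *\<^sub>R tangent_proj \<Omega> X0 Y0 + t *\<^sub>R tangent_proj \<Omega> X0 Y1"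
  proof (rule ex1I[of _ W])
    show "W \<in> bdry_plus \<Omega> X0 \<and> tangent_proj \<Omega> X0 W = (1 - t) *\<^sub>R tangent_proj \<Omega> X0 Y0 + t *\<^sub>R tangent_proj \<Omega> X0 Y1"
      using Wbp PW unfolding P_def by simp
  next
    fix Y assume Y: "Y \<in> bdry_plus \<Omega> X0 \<and> tangent_proj \<Omega> X0 Y = (1 - t) *\<^sub>R tangent_proj \<Omega> X0 Y0 + t *\<^sub>R tangent_proj \<Omega> X0 Y1"
    then have PY: "P Y = P W" using PW unfolding P_def by simp
    have YO: "Y \<in> \<Omega>" using Y bp frO by blast
    obtain k where k: "k \<ge> 0" "Y = W + k *\<^sub>R N" using key[of Y W] Y WO PY by auto
    obtain k' where k': "k' \<ge> 0" "W = Y + k' *\<^sub>R N" using key[of W Y] Wbp YO PY by auto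
    have "(k + k') *\<^sub>R N = 0" using k(2) k'(2) by (simp add: algebra_simps)
    then have "k + k' = 0" using nN by auto
    then have "k = 0" using k(1) k'(1) by simp
    then show "Y = W" using k(2) by simp
  qed
  define Yt where "Yt = c_segment \<Omega> X0 Y0 Y1 t"
  have Yt: "Yt \<in> bdry_plus \<Omega> X0 \<and> tangent_proj \<Omega> X0 Yt = (1 - t) *\<^sub>R tangent_proj \<Omega> X0 Y0 + t *\<^sub>R tangent_proj \<Omega> X0 Y1"
    unfolding Yt_def c_segment_def by (rule theI'[OF ex1])
  then have PYt: "P Z = P Yt" using PZ unfolding P_def by simp
  obtain k where k: "k \<ge> 0" "Yt = Z + k *\<^sub>R N" using key[of Yt Z] Yt ZO PYt by auto
  have XO: "X \<in> \<Omega>" using assms(4) frO by blast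
  have r: "(X - X0) \<bullet> N \<le> 0" unfolding N_def using normal_facts(2)[OF cb C1 assms(3) XO] .
  have kr: "k * ((X - X0) \<bullet> N) \<le> 0" using k(1) r by (simp add: mult_nonneg_nonpos)
  have ip: "(X - X0) \<bullet> Yt = (1 - t) * ((X - X0) \<bullet> Y0) + t * ((X - X0) \<bullet> Y1) + k * ((X - X0) \<bullet> N)"
    unfolding k(2) Z_def by (simp add: inner_add_right)
  have c1: "cost X0 Yt - cost X Yt = (X0 \<bullet> X0 - X \<bullet> X) / 2 + (X - X0) \<bullet> Yt" by (rule cost_diff)
  have c2: "cost X0 Y0 - cost X Y0 = (X0 \<bullet> X0 - X \<bullet> X) / 2 + (X - X0) \<bullet> Y0" by (rule cost_diff)
  have c3: "cost X0 Y1 - cost X Y1 = (X0 \<bullet> X0 - X \<bullet> X) / 2 + (X - X0) \<bullet> Y1" by (rule cost_diff)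
  have "- cost X Yt + cost X0 Yt + cost X Y0 - cost X0 Y0 = (X - X0) \<bullet> Yt - (X - X0) \<bullet> Y0"
    using c1 c2 by linarith
  also have "\<dots> = t * ((X - X0) \<bullet> Y1 - (X - X0) \<bullet> Y0) + k * ((X - X0) \<bullet> N)"
    unfolding ip by (simp add: algebra_simps)
  also have "\<dots> \<le> t * ((X - X0) \<bullet> Y1 - (X - X0) \<bullet> Y0)" using kr by simp
  also have "(X - X0) \<bullet> Y1 - (X - X0) \<bullet> Y0 = - cost X Y1 + cost X0 Y1 + cost X Y0 - cost X0 Y0"
    using c2 c3 by linarith
  finally show ?thesis unfolding Yt_def .
qed

end
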